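(* For every positive integer $n$, $$LD(P_3\square P_n)\geq\begin{cases} n+1 & \text{if } n\equiv 1 \pmod 3,\\ n & \text{otherwise.}\end{cases}$$
   Context: $P_n$ is the path on $n$ vertices and $\square$ is the Cartesian product of graphs. For a graph $G$, $C\subseteq V(G)$ and $v\in V(G)$ let $I(v)=N[v]\cap C$ ($N[v]$ the closed neighborhood). $C$ is a locating-dominating set if $I(v)\neq\emptyset$ for all $v\in V(G)\setminus C$ and $I(u)\neq I(v)$ for all distinct $u,v\in V(G)\setminus C$. $LD(G)$ is the minimum cardinality of a locating-dominating set of $G$. *)

theory Defs
  imports Main
begin

(* A graph is given by a vertex set V and a symmetric irreflexive adjacency relation E. *)

definition closed_nbhd :: "'a set \<Rightarrow> ('a \<Rightarrow> 'a \<Rightarrow> bool) \<Rightarrow> 'a \<Rightarrow> 'a set" where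
  "closed_nbhd V E v = {u \<in> V. u = v \<or> E v u}"

definition locating_dominating :: "'a set \<Rightarrow> ('a \<Rightarrow> 'a \<Rightarrow> bool) \<Rightarrow> 'a set \<Rightarrow> bool" where
  "locating_dominating V E C \<longleftrightarrow> C \<subseteq> V \<and>
     (\<forall>v \<in> V - C. closed_nbhd V E v \<inter> C \<noteq> {}) \<and>
     (\<forall>u \<in> V - C. \<forall>v \<in> V - C. u \<noteq> v \<longrightarrow> closed_nbhd V E u \<inter> C \<noteq> closed_nbhd V E v \<inter> C)"

(* LD(G): minimum cardinality of a locating-dominating set (for finite V; V itself is one). *)
definition LD :: "'a set \<Rightarrow> ('a \<Rightarrow> 'a \<Rightarrow> bool) \<Rightarrow> nat" where
  "LD V E = (LEAST k. \<exists>C. locating_dominating V E C \<and> card C = k)"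

definition path_vertices :: "nat \<Rightarrow> nat set" where
  "path_vertices n = {0..<n}"

definition path_adj :: "nat \<Rightarrow> nat \<Rightarrow> bool" where
  "path_adj i j \<longleftrightarrow> i = j + 1 \<or> j = i + 1"

definition cart_adj :: "('a \<Rightarrow> 'a \<Rightarrow> bool) \<Rightarrow> ('b \<Rightarrow> 'b \<Rightarrow> bool) \<Rightarrow> 'a \<times> 'b \<Rightarrow> 'a \<times> 'b \<Rightarrow> bool" where
  "cart_adj E1 E2 x y \<longleftrightarrow>
     (fst x = fst y \<and> E2 (snd x) (snd y)) \<or> (snd x = snd y \<and> E1 (fst x) (fst y))"

end

theory Submission
  imports Defs
begin

definition okD :: "nat \<Rightarrow> nat \<Rightarrow> nat \<Rightarrow> bool" where
  "okD a b c \<longleftrightarrow> (b = 0 \<longrightarrow> a + c \<ge> 3) \<and> (b = 1 \<longrightarrow> a + c \<ge> 1)"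
definition okF :: "nat \<Rightarrow> nat \<Rightarrow> nat \<Rightarrow> nat \<Rightarrow> bool" where
  "okF a b c d \<longleftrightarrow> (b = 1 \<and> c = 1 \<and> d = 0 \<longrightarrow> a \<ge> 2)"
definition corr :: "nat \<Rightarrow> nat \<Rightarrow> nat \<Rightarrow> nat \<Rightarrow> int" where
  "corr a b c r = (if a = 0 \<and> b = 0 \<and> c = 3 then (if r = 2 then 1 else 2)
     else if a = 0 \<and> b = 1 \<and> c \<ge> 1 then 1
     else if a = 0 \<and> b = 2 then 1
     else if a = 1 \<and> b = 0 \<and> c \<ge> 2 then 1
     else if a = 1 \<and> b = 1 \<and> c = 0 then 1
     else if a = 0 \<and> b = 3 \<and> r \<noteq> 0 then 1
     else if a = 3 \<and> r = 1 then -1 else 0)"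

lemma le3_cases: "(a::nat) \<le> 3 \<Longrightarrow> a = 0 \<or> a = 1 \<or> a = 2 \<or> a = 3" by auto
lemma lt3_cases: "(a::nat) < 3 \<Longrightarrow> a = 0 \<or> a = 1 \<or> a = 2" by auto

lemma trans_check:
  assumes "a \<le> 3" "b \<le> 3" "c \<le> 3" "d \<le> 3" "r < 3"
    "okD a b c" "okD b c d" "okF a b c d"
  shows "int a + corr a b c r \<ge> 1 + corr b c d ((r + 1) mod 3)"
  using le3_cases[OF assms(1)] le3_cases[OF assms(2)] le3_cases[OF assms(3)]
    le3_cases[OF assms(4)] lt3_cases[OF assms(5)] assms(6-8)
  by (elim disjE; simp add: okD_def okF_def corr_def)

lemma base_check:
  assumes "a \<le> 3" "b \<le> 3" "c \<le> 3" "okD 0 a b" "okD a b c" "okF 0 a b c"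
  shows "corr a b c 0 \<le> 0"
  using le3_cases[OF assms(1)] le3_cases[OF assms(2)] le3_cases[OF assms(3)] assms(4-6)
  by (elim disjE; simp add: okD_def okF_def corr_def)

lemma end_check:
  assumes "a \<le> 3" "b \<le> 3" "c \<le> 3" "r < 3" "okD a b c" "okD b c 0" "okF a b c 0"
  shows "int a + int b + int c + corr a b c r \<ge> 3 + (if r = 1 then 1 else 0)"
  using le3_cases[OF assms(1)] le3_cases[OF assms(2)] le3_cases[OF assms(3)]
    lt3_cases[OF assms(4)] assms(5-7)
  by (elim disjE; simp add: okD_def okF_def corr_def)

lemma add34: "n + 3 = Suc (Suc (Suc n))" "n + 4 = Suc (Suc (Suc (Suc n)))" by simp_all

lemma word:
  fixes c :: "nat \<Rightarrow> nat" and n :: nat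
  assumes n1: "n \<ge> 1" and c0: "c 0 = 0" and bnd: "\<And>k. c k \<le> 3"
    and out: "\<And>k. k > n \<Longrightarrow> c k = 0"
    and D: "\<And>k. 1 \<le> k \<Longrightarrow> k \<le> n \<Longrightarrow> okD (c (k-1)) (c k) (c (k+1))"
    and F: "\<And>k. 1 \<le> k \<Longrightarrow> k + 1 \<le> n \<Longrightarrow> okF (c (k-1)) (c k) (c (k+1)) (c (k+2))"
  shows "n + (if n mod 3 = 1 then 1 else 0) \<le> (\<Sum>k=1..n. c k)"
proof (cases "n \<ge> 3")
  case True
  have inv: "m + 3 \<le> n \<Longrightarrow> int (\<Sum>k=1..m. c k) \<ge> int m + corr (c (m+1)) (c (m+2)) (c (m+3)) (m mod 3)" for m
  proof (induction m)
    case 0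
    have "okD 0 (c 1) (c 2)" using D[of 1] 0 c0 by (simp add: eval_nat_numeral)
    moreover have "okD (c 1) (c 2) (c 3)" using D[of 2] 0 by (simp add: eval_nat_numeral)
    moreover have "okF 0 (c 1) (c 2) (c 3)" using F[of 1] 0 c0 by (simp add: eval_nat_numeral)
    ultimately have "corr (c 1) (c 2) (c 3) 0 \<le> 0" using base_check[of "c 1" "c 2" "c 3"] bnd by blast
    then show ?case by (simp add: numeral_2_eq_2)
  next
    case (Suc m)
    have h1: "okD (c (m+1)) (c (m+2)) (c (m+3))" using D[of "m+2"] Suc.prems by (simp add: add34)
    have h2: "okD (c (m+2)) (c (m+3)) (c (m+4))" using D[of "m+3"] Suc.prems by (simp add: add34)
    have h3: "okF (c (m+1)) (c (m+2)) (c (m+3)) (c (m+4))" using F[of "m+2"] Suc.prems by (simp add: add34)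
    have T: "int (c (m+1)) + corr (c (m+1)) (c (m+2)) (c (m+3)) (m mod 3)
        \<ge> 1 + corr (c (m+2)) (c (m+3)) (c (m+4)) ((m mod 3 + 1) mod 3)"
      using trans_check[OF bnd bnd bnd bnd _ h1 h2 h3, of "m mod 3"] by (simp add: add34)
    have md: "(m mod 3 + 1) mod 3 = Suc m mod 3" by (simp add: mod_Suc)
    have sm: "int (\<Sum>k=1..Suc m. c k) = int (\<Sum>k=1..m. c k) + int (c (m+1))" by (simp add: add34)
    have IH: "int (\<Sum>k=1..m. c k) \<ge> int m + corr (c (m+1)) (c (m+2)) (c (m+3)) (m mod 3)"
      using Suc.IH Suc.prems by (simp add: add34)
    have e: "Suc m + 1 = m+2" "Suc m + 2 = m+3" "Suc m + 3 = m+4" by (simp_all add: add34)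
    show ?case unfolding e using T IH sm md by (simp add: add34)
  qed
  define m where "m = n - 3"
  have nm: "n = m + 3" using True m_def by (simp add: add34)
  have I: "int (\<Sum>k=1..m. c k) \<ge> int m + corr (c (m+1)) (c (m+2)) (c (m+3)) (m mod 3)"
    using inv[of m] nm by (simp add: add34)
  have "okD (c (m+1)) (c (m+2)) (c (m+3))" using D[of "m+2"] nm by (simp add: add34)
  moreover have "okD (c (m+2)) (c (m+3)) 0" using D[of "m+3"] nm out[of "m+4"] by (simp add: add34)
  moreover have "okF (c (m+1)) (c (m+2)) (c (m+3)) 0" using F[of "m+2"] nm out[of "m+4"]
    by (simp add: numeral_eq_Suc)
  ultimately have E: "int (c (m+1)) + int (c (m+2)) + int (c (m+3)) + corr (c (m+1)) (c (m+2)) (c (m+3)) (m mod 3)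
      \<ge> 3 + (if m mod 3 = 1 then 1 else 0)"
    by (intro end_check[OF bnd bnd bnd]) simp_all
  have S: "(\<Sum>k=1..n. c k) = (\<Sum>k=1..m. c k) + c (m+1) + c (m+2) + c (m+3)"
    using nm by (simp add: add34)
  have md: "n mod 3 = m mod 3" using nm by (simp add: add34)
  have Si: "int (\<Sum>k=1..n. c k) = int (\<Sum>k=1..m. c k) + int (c (m+1)) + int (c (m+2)) + int (c (m+3))"
    using S by simp
  have inm: "int n = int m + 3" using nm by simp
  show ?thesis
  proof (cases "m mod 3 = 1")
    case True
    have E': "int (c (m+1)) + int (c (m+2)) + int (c (m+3)) + corr (c (m+1)) (c (m+2)) (c (m+3)) (m mod 3) \<ge> 4"
      using E True by simp
    have "int (n + 1) \<le> int (\<Sum>k=1..n. c k)" using I E' Si inm by linarith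
    then have "n + 1 \<le> (\<Sum>k=1..n. c k)" by (simp only: of_nat_le_iff)
    then show ?thesis using True md by simp
  next
    case False
    have E': "int (c (m+1)) + int (c (m+2)) + int (c (m+3)) + corr (c (m+1)) (c (m+2)) (c (m+3)) (m mod 3) \<ge> 3"
      using E False by simp
    have "int n \<le> int (\<Sum>k=1..n. c k)" using I E' Si inm by linarith
    then have "n \<le> (\<Sum>k=1..n. c k)" by (simp only: of_nat_le_iff)
    then show ?thesis using False md by simp
  qed
next
  case False
  then have "n = 1 \<or> n = 2" using n1 by auto
  then show ?thesis
  proof
    assume "n = 1"
    then show ?thesis using D[of 1] c0 out[of 2] by (simp add: okD_def numeral_2_eq_2)
  next
    assume n2: "n = 2"
    have "okD 0 (c 1) (c 2)" using D[of 1] c0 n2 by (simp add: numeral_2_eq_2)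
    moreover have "okD (c 1) (c 2) 0" using D[of 2] out[of 3] n2 by simp
    ultimately have "c 1 + c 2 \<ge> 2" by (auto simp: okD_def)
    moreover have "(\<Sum>k=1..2. c k) = c 1 + c 2" by (simp add: numeral_2_eq_2)
    ultimately show ?thesis using n2 by simp
  qed
qed

definition nbp :: "nat \<Rightarrow> nat \<Rightarrow> nat \<Rightarrow> nat \<Rightarrow> bool" where
  "nbp i j a b \<longleftrightarrow> (a = i \<and> b = j) \<or> (a = i \<and> (j = b + 1 \<or> b = j + 1)) \<or> (b = j \<and> (i = a + 1 \<or> a = i + 1))"

definition xb :: "(nat \<times> nat) set \<Rightarrow> nat \<Rightarrow> nat \<Rightarrow> bool" where
  "xb C r k \<longleftrightarrow> 0 < k \<and> (r, k - 1) \<in> C"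

definition cc :: "(nat \<times> nat) set \<Rightarrow> nat \<Rightarrow> nat" where
  "cc C k = of_bool (xb C 0 k) + of_bool (xb C (Suc 0) k) + of_bool (xb C (Suc (Suc 0)) k)"

lemma cnt3_eqs:
  "(of_bool a + of_bool b + of_bool c = (0::nat)) \<longleftrightarrow> \<not>a \<and> \<not>b \<and> \<not>c"
  "(of_bool a + of_bool b + of_bool c = (1::nat)) \<longleftrightarrow> (a \<and> \<not>b \<and> \<not>c) \<or> (\<not>a \<and> b \<and> \<not>c) \<or> (\<not>a \<and> \<not>b \<and> c)"
  "((2::nat) \<le> of_bool a + of_bool b + of_bool c) \<longleftrightarrow> (a \<and> b) \<or> (a \<and> c) \<or> (b \<and> c)"
  "((3::nat) \<le> of_bool a + of_bool b + of_bool c) \<longleftrightarrow> a \<and> b \<and> c"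
  "((1::nat) \<le> of_bool a + of_bool b + of_bool c) \<longleftrightarrow> a \<or> b \<or> c"
  by (cases a; cases b; cases c; simp)+

lemma nb_iff:
  "(a, b) \<in> closed_nbhd (path_vertices 3 \<times> path_vertices n) (cart_adj path_adj path_adj) (i, j)
    \<longleftrightarrow> a < 3 \<and> b < n \<and> nbp i j a b"
  unfolding closed_nbhd_def cart_adj_def path_adj_def path_vertices_def nbp_def by auto

lemma domL:
  assumes LD: "locating_dominating (path_vertices 3 \<times> path_vertices n) (cart_adj path_adj path_adj) C"
    and "i < 3" "j < n" "(i, j) \<notin> C"
  shows "\<exists>a b. (a = 0 \<or> a = Suc 0 \<or> a = Suc (Suc 0)) \<and> (a, b) \<in> C \<and> nbp i j a b"
proof -
  have "(i, j) \<in> path_vertices 3 \<times> path_vertices n - C" using assms by (simp add: path_vertices_def)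
  then have "closed_nbhd (path_vertices 3 \<times> path_vertices n) (cart_adj path_adj path_adj) (i, j) \<inter> C \<noteq> {}"
    using LD unfolding locating_dominating_def by blast
  then obtain a b where "(a, b) \<in> closed_nbhd (path_vertices 3 \<times> path_vertices n) (cart_adj path_adj path_adj) (i, j)" "(a, b) \<in> C"
    by auto
  then have "a < 3" "nbp i j a b" using nb_iff by blast+
  moreover have "a < 3 \<longleftrightarrow> a = 0 \<or> a = Suc 0 \<or> a = Suc (Suc 0)" by auto
  ultimately show ?thesis using \<open>(a, b) \<in> C\<close> by blast
qed

lemma sepL:
  assumes LD: "locating_dominating (path_vertices 3 \<times> path_vertices n) (cart_adj path_adj path_adj) C"
    and "i < 3" "j < n" "(i, j) \<notin> C" "i' < 3" "j' < n" "(i', j') \<notin> C" "(i, j) \<noteq> (i', j')"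
  shows "\<exists>a b. (a = 0 \<or> a = Suc 0 \<or> a = Suc (Suc 0)) \<and> (a, b) \<in> C \<and> \<not> (nbp i j a b \<longleftrightarrow> nbp i' j' a b)"
proof -
  let ?V = "path_vertices 3 \<times> path_vertices n" and ?E = "cart_adj path_adj path_adj"
  have CV: "C \<subseteq> ?V" using LD unfolding locating_dominating_def by blast
  have "(i, j) \<in> ?V - C" "(i', j') \<in> ?V - C" using assms by (simp_all add: path_vertices_def)
  then have "closed_nbhd ?V ?E (i, j) \<inter> C \<noteq> closed_nbhd ?V ?E (i', j') \<inter> C"
    using LD assms(8) unfolding locating_dominating_def by blast
  then obtain w where w: "w \<in> C" "\<not> (w \<in> closed_nbhd ?V ?E (i, j) \<longleftrightarrow> w \<in> closed_nbhd ?V ?E (i', j'))"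
    by blast
  obtain a b where ab: "w = (a, b)" by (cases w)
  have "a < 3" "b < n" using CV w(1) ab by (auto simp: path_vertices_def)
  moreover have "a < 3 \<longleftrightarrow> a = 0 \<or> a = Suc 0 \<or> a = Suc (Suc 0)" by auto
  ultimately show ?thesis using w ab nb_iff by blast
qed

lemma propD:
  fixes l0 l1 l2 p0 p1 p2 q0 q1 q2 s0 s1 s2 :: bool
  assumes "\<not> p0 \<Longrightarrow> l0 \<or> q0 \<or> p1"
    and "\<not> p1 \<Longrightarrow> p0 \<or> l1 \<or> q1 \<or> p2"
    and "\<not> p2 \<Longrightarrow> p1 \<or> l2 \<or> q2"
    and "\<not> p0 \<Longrightarrow> \<not> p1 \<Longrightarrow> l0 \<or> q0 \<or> l1 \<or> q1 \<or> p2"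
    and "\<not> p0 \<Longrightarrow> \<not> p2 \<Longrightarrow> l0 \<or> q0 \<or> l2 \<or> q2"
    and "\<not> p1 \<Longrightarrow> \<not> p2 \<Longrightarrow> p0 \<or> l1 \<or> q1 \<or> l2 \<or> q2"
  shows "okD (of_bool l0 + of_bool l1 + of_bool l2) (of_bool p0 + of_bool p1 + of_bool p2) (of_bool q0 + of_bool q1 + of_bool q2)"
  using assms by (cases l0; cases l1; cases l2; cases p0; cases p1; cases p2; cases q0; cases q1; cases q2; simp add: okD_def)

lemma propF:
  fixes l0 l1 l2 p0 p1 p2 q0 q1 q2 s0 s1 s2 :: bool
  assumes "\<not> p0 \<Longrightarrow> l0 \<or> q0 \<or> p1"
    and "\<not> p1 \<Longrightarrow> p0 \<or> l1 \<or> q1 \<or> p2"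
    and "\<not> p2 \<Longrightarrow> p1 \<or> l2 \<or> q2"
    and "\<not> q0 \<Longrightarrow> p0 \<or> s0 \<or> q1"
    and "\<not> q1 \<Longrightarrow> q0 \<or> p1 \<or> s1 \<or> q2"
    and "\<not> q2 \<Longrightarrow> q1 \<or> p2 \<or> s2"
    and "\<not> p0 \<Longrightarrow> \<not> p1 \<Longrightarrow> l0 \<or> q0 \<or> l1 \<or> q1 \<or> p2"
    and "\<not> p0 \<Longrightarrow> \<not> p2 \<Longrightarrow> l0 \<or> q0 \<or> l2 \<or> q2"
    and "\<not> p0 \<Longrightarrow> \<not> q0 \<Longrightarrow> l0 \<or> s0 \<or> p1 \<or> q1"
    and "\<not> p0 \<Longrightarrow> \<not> q1 \<Longrightarrow> l0 \<or> s1 \<or> q2"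
    and "\<not> p1 \<Longrightarrow> \<not> p2 \<Longrightarrow> p0 \<or> l1 \<or> q1 \<or> l2 \<or> q2"
    and "\<not> p1 \<Longrightarrow> \<not> q0 \<Longrightarrow> s0 \<or> l1 \<or> p2"
    and "\<not> p1 \<Longrightarrow> \<not> q1 \<Longrightarrow> p0 \<or> q0 \<or> l1 \<or> s1 \<or> p2 \<or> q2"
    and "\<not> p1 \<Longrightarrow> \<not> q2 \<Longrightarrow> p0 \<or> l1 \<or> s2"
    and "\<not> p2 \<Longrightarrow> \<not> q1 \<Longrightarrow> q0 \<or> s1 \<or> l2"
    and "\<not> p2 \<Longrightarrow> \<not> q2 \<Longrightarrow> p1 \<or> q1 \<or> l2 \<or> s2"
    and "\<not> q0 \<Longrightarrow> \<not> q1 \<Longrightarrow> p0 \<or> s0 \<or> p1 \<or> s1 \<or> q2"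
    and "\<not> q0 \<Longrightarrow> \<not> q2 \<Longrightarrow> p0 \<or> s0 \<or> p2 \<or> s2"
    and "\<not> q1 \<Longrightarrow> \<not> q2 \<Longrightarrow> q0 \<or> p1 \<or> s1 \<or> p2 \<or> s2"
  shows "okF (of_bool l0 + of_bool l1 + of_bool l2) (of_bool p0 + of_bool p1 + of_bool p2) (of_bool q0 + of_bool q1 + of_bool q2) (of_bool s0 + of_bool s1 + of_bool s2)"
  using assms unfolding okD_def okF_def cnt3_eqs by sat

lemma ruleD:
  assumes LD: "locating_dominating (path_vertices 3 \<times> path_vertices n) (cart_adj path_adj path_adj) C"
    and jn: "j < n"
  shows "okD (cc C j) (cc C (j+1)) (cc C (j+2))"
proof -
  have f0: "\<not> xb C 0 (j+1) \<Longrightarrow> xb C 0 j \<or> xb C 0 (j+2) \<or> xb C (Suc 0) (j+1)" using domL[OF LD, of "0" "j"] jn by (auto simp: xb_def nbp_def)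
  have f1: "\<not> xb C (Suc 0) (j+1) \<Longrightarrow> xb C 0 (j+1) \<or> xb C (Suc 0) j \<or> xb C (Suc 0) (j+2) \<or> xb C (Suc (Suc 0)) (j+1)" using domL[OF LD, of "(Suc 0)" "j"] jn by (auto simp: xb_def nbp_def)
  have f2: "\<not> xb C (Suc (Suc 0)) (j+1) \<Longrightarrow> xb C (Suc 0) (j+1) \<or> xb C (Suc (Suc 0)) j \<or> xb C (Suc (Suc 0)) (j+2)" using domL[OF LD, of "(Suc (Suc 0))" "j"] jn by (auto simp: xb_def nbp_def)
  have f3: "\<not> xb C 0 (j+1) \<Longrightarrow> \<not> xb C (Suc 0) (j+1) \<Longrightarrow> xb C 0 j \<or> xb C 0 (j+2) \<or> xb C (Suc 0) j \<or> xb C (Suc 0) (j+2) \<or> xb C (Suc (Suc 0)) (j+1)" using sepL[OF LD, of "0" "j" "(Suc 0)" "j"] jn by (auto simp: xb_def nbp_def)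
  have f4: "\<not> xb C 0 (j+1) \<Longrightarrow> \<not> xb C (Suc (Suc 0)) (j+1) \<Longrightarrow> xb C 0 j \<or> xb C 0 (j+2) \<or> xb C (Suc (Suc 0)) j \<or> xb C (Suc (Suc 0)) (j+2)" using sepL[OF LD, of "0" "j" "(Suc (Suc 0))" "j"] jn by (auto simp: xb_def nbp_def)
  have f5: "\<not> xb C (Suc 0) (j+1) \<Longrightarrow> \<not> xb C (Suc (Suc 0)) (j+1) \<Longrightarrow> xb C 0 (j+1) \<or> xb C (Suc 0) j \<or> xb C (Suc 0) (j+2) \<or> xb C (Suc (Suc 0)) j \<or> xb C (Suc (Suc 0)) (j+2)" using sepL[OF LD, of "(Suc 0)" "j" "(Suc (Suc 0))" "j"] jn by (auto simp: xb_def nbp_def)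
  show ?thesis unfolding cc_def by (rule propD[OF f0 f1 f2 f3 f4 f5])
qed

lemma ruleF:
  assumes LD: "locating_dominating (path_vertices 3 \<times> path_vertices n) (cart_adj path_adj path_adj) C"
    and jn: "j + 1 < n"
  shows "okF (cc C j) (cc C (j+1)) (cc C (j+2)) (cc C (j+3))"
proof -
  have f0: "\<not> xb C 0 (j+1) \<Longrightarrow> xb C 0 j \<or> xb C 0 (j+2) \<or> xb C (Suc 0) (j+1)" using domL[OF LD, of "0" "j"] jn by (auto simp: xb_def nbp_def)
  have f1: "\<not> xb C (Suc 0) (j+1) \<Longrightarrow> xb C 0 (j+1) \<or> xb C (Suc 0) j \<or> xb C (Suc 0) (j+2) \<or> xb C (Suc (Suc 0)) (j+1)" using domL[OF LD, of "(Suc 0)" "j"] jn by (auto simp: xb_def nbp_def)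
  have f2: "\<not> xb C (Suc (Suc 0)) (j+1) \<Longrightarrow> xb C (Suc 0) (j+1) \<or> xb C (Suc (Suc 0)) j \<or> xb C (Suc (Suc 0)) (j+2)" using domL[OF LD, of "(Suc (Suc 0))" "j"] jn by (auto simp: xb_def nbp_def)
  have f3: "\<not> xb C 0 (j+2) \<Longrightarrow> xb C 0 (j+1) \<or> xb C 0 (j+3) \<or> xb C (Suc 0) (j+2)" using domL[OF LD, of "0" "(j+1)"] jn by (auto simp: xb_def nbp_def)
  have f4: "\<not> xb C (Suc 0) (j+2) \<Longrightarrow> xb C 0 (j+2) \<or> xb C (Suc 0) (j+1) \<or> xb C (Suc 0) (j+3) \<or> xb C (Suc (Suc 0)) (j+2)" using domL[OF LD, of "(Suc 0)" "(j+1)"] jn by (auto simp: xb_def nbp_def)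
  have f5: "\<not> xb C (Suc (Suc 0)) (j+2) \<Longrightarrow> xb C (Suc 0) (j+2) \<or> xb C (Suc (Suc 0)) (j+1) \<or> xb C (Suc (Suc 0)) (j+3)" using domL[OF LD, of "(Suc (Suc 0))" "(j+1)"] jn by (auto simp: xb_def nbp_def)
  have f6: "\<not> xb C 0 (j+1) \<Longrightarrow> \<not> xb C (Suc 0) (j+1) \<Longrightarrow> xb C 0 j \<or> xb C 0 (j+2) \<or> xb C (Suc 0) j \<or> xb C (Suc 0) (j+2) \<or> xb C (Suc (Suc 0)) (j+1)" using sepL[OF LD, of "0" "j" "(Suc 0)" "j"] jn by (auto simp: xb_def nbp_def)
  have f7: "\<not> xb C 0 (j+1) \<Longrightarrow> \<not> xb C (Suc (Suc 0)) (j+1) \<Longrightarrow> xb C 0 j \<or> xb C 0 (j+2) \<or> xb C (Suc (Suc 0)) j \<or> xb C (Suc (Suc 0)) (j+2)" using sepL[OF LD, of "0" "j" "(Suc (Suc 0))" "j"] jn by (auto simp: xb_def nbp_def)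
  have f8: "\<not> xb C 0 (j+1) \<Longrightarrow> \<not> xb C 0 (j+2) \<Longrightarrow> xb C 0 j \<or> xb C 0 (j+3) \<or> xb C (Suc 0) (j+1) \<or> xb C (Suc 0) (j+2)" using sepL[OF LD, of "0" "j" "0" "(j+1)"] jn by (auto simp: xb_def nbp_def)
  have f9: "\<not> xb C 0 (j+1) \<Longrightarrow> \<not> xb C (Suc 0) (j+2) \<Longrightarrow> xb C 0 j \<or> xb C (Suc 0) (j+3) \<or> xb C (Suc (Suc 0)) (j+2)" using sepL[OF LD, of "0" "j" "(Suc 0)" "(j+1)"] jn by (auto simp: xb_def nbp_def)
  have f10: "\<not> xb C (Suc 0) (j+1) \<Longrightarrow> \<not> xb C (Suc (Suc 0)) (j+1) \<Longrightarrow> xb C 0 (j+1) \<or> xb C (Suc 0) j \<or> xb C (Suc 0) (j+2) \<or> xb C (Suc (Suc 0)) j \<or> xb C (Suc (Suc 0)) (j+2)" using sepL[OF LD, of "(Suc 0)" "j" "(Suc (Suc 0))" "j"] jn by (auto simp: xb_def nbp_def)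
  have f11: "\<not> xb C (Suc 0) (j+1) \<Longrightarrow> \<not> xb C 0 (j+2) \<Longrightarrow> xb C 0 (j+3) \<or> xb C (Suc 0) j \<or> xb C (Suc (Suc 0)) (j+1)" using sepL[OF LD, of "(Suc 0)" "j" "0" "(j+1)"] jn by (auto simp: xb_def nbp_def)
  have f12: "\<not> xb C (Suc 0) (j+1) \<Longrightarrow> \<not> xb C (Suc 0) (j+2) \<Longrightarrow> xb C 0 (j+1) \<or> xb C 0 (j+2) \<or> xb C (Suc 0) j \<or> xb C (Suc 0) (j+3) \<or> xb C (Suc (Suc 0)) (j+1) \<or> xb C (Suc (Suc 0)) (j+2)" using sepL[OF LD, of "(Suc 0)" "j" "(Suc 0)" "(j+1)"] jn by (auto simp: xb_def nbp_def)
  have f13: "\<not> xb C (Suc 0) (j+1) \<Longrightarrow> \<not> xb C (Suc (Suc 0)) (j+2) \<Longrightarrow> xb C 0 (j+1) \<or> xb C (Suc 0) j \<or> xb C (Suc (Suc 0)) (j+3)" using sepL[OF LD, of "(Suc 0)" "j" "(Suc (Suc 0))" "(j+1)"] jn by (auto simp: xb_def nbp_def)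
  have f14: "\<not> xb C (Suc (Suc 0)) (j+1) \<Longrightarrow> \<not> xb C (Suc 0) (j+2) \<Longrightarrow> xb C 0 (j+2) \<or> xb C (Suc 0) (j+3) \<or> xb C (Suc (Suc 0)) j" using sepL[OF LD, of "(Suc (Suc 0))" "j" "(Suc 0)" "(j+1)"] jn by (auto simp: xb_def nbp_def)
  have f15: "\<not> xb C (Suc (Suc 0)) (j+1) \<Longrightarrow> \<not> xb C (Suc (Suc 0)) (j+2) \<Longrightarrow> xb C (Suc 0) (j+1) \<or> xb C (Suc 0) (j+2) \<or> xb C (Suc (Suc 0)) j \<or> xb C (Suc (Suc 0)) (j+3)" using sepL[OF LD, of "(Suc (Suc 0))" "j" "(Suc (Suc 0))" "(j+1)"] jn by (auto simp: xb_def nbp_def)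
  have f16: "\<not> xb C 0 (j+2) \<Longrightarrow> \<not> xb C (Suc 0) (j+2) \<Longrightarrow> xb C 0 (j+1) \<or> xb C 0 (j+3) \<or> xb C (Suc 0) (j+1) \<or> xb C (Suc 0) (j+3) \<or> xb C (Suc (Suc 0)) (j+2)" using sepL[OF LD, of "0" "(j+1)" "(Suc 0)" "(j+1)"] jn by (auto simp: xb_def nbp_def)
  have f17: "\<not> xb C 0 (j+2) \<Longrightarrow> \<not> xb C (Suc (Suc 0)) (j+2) \<Longrightarrow> xb C 0 (j+1) \<or> xb C 0 (j+3) \<or> xb C (Suc (Suc 0)) (j+1) \<or> xb C (Suc (Suc 0)) (j+3)" using sepL[OF LD, of "0" "(j+1)" "(Suc (Suc 0))" "(j+1)"] jn by (auto simp: xb_def nbp_def)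
  have f18: "\<not> xb C (Suc 0) (j+2) \<Longrightarrow> \<not> xb C (Suc (Suc 0)) (j+2) \<Longrightarrow> xb C 0 (j+2) \<or> xb C (Suc 0) (j+1) \<or> xb C (Suc 0) (j+3) \<or> xb C (Suc (Suc 0)) (j+1) \<or> xb C (Suc (Suc 0)) (j+3)" using sepL[OF LD, of "(Suc 0)" "(j+1)" "(Suc (Suc 0))" "(j+1)"] jn by (auto simp: xb_def nbp_def)
  show ?thesis unfolding cc_def by (rule propF[OF f0 f1 f2 f3 f4 f5 f6 f7 f8 f9 f10 f11 f12 f13 f14 f15 f16 f17 f18])
qed

lemma card3: "card {r. r < (3::nat) \<and> P r} = of_bool (P 0) + of_bool (P (Suc 0)) + of_bool (P (Suc (Suc 0)))"
proof -
  have "{r. r < (3::nat) \<and> P r} = (if P 0 then {0} else {}) \<union> (if P (Suc 0) then {Suc 0} else {}) \<union> (if P (Suc (Suc 0)) then {Suc (Suc 0)} else {})"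
  proof (rule set_eqI)
    fix x
    show "x \<in> {r. r < (3::nat) \<and> P r} \<longleftrightarrow> x \<in> (if P 0 then {0} else {}) \<union> (if P (Suc 0) then {Suc 0} else {}) \<union> (if P (Suc (Suc 0)) then {Suc (Suc 0)} else {})"
      by (cases x; cases "x - 1"; cases "x - 2"; auto)
  qed
  then show ?thesis by (cases "P 0"; cases "P (Suc 0)"; cases "P (Suc (Suc 0))"; simp)
qed

lemma col_card:
  assumes CV: "C \<subseteq> {0..<3} \<times> UNIV"
  shows "card {p \<in> C. snd p = m} = cc C (Suc m)"
proof -
  have "{p \<in> C. snd p = m} = (\<lambda>r. (r, m)) ` {r. r < 3 \<and> (r, m) \<in> C}" using CV by auto
  moreover have "inj (\<lambda>r::nat. (r, m))" by (auto intro: injI)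
  ultimately have "card {p \<in> C. snd p = m} = card {r. r < 3 \<and> (r, m) \<in> C}"
    by (simp add: card_image inj_on_def)
  also have "\<dots> = cc C (Suc m)" unfolding card3 cc_def xb_def by simp
  finally show ?thesis .
qed

lemma card_cols:
  assumes CV: "C \<subseteq> {0..<3} \<times> UNIV" and fin: "finite C"
  shows "card {p \<in> C. snd p < m} = (\<Sum>k=1..m. cc C k)"
proof (induction m)
  case 0
  then show ?case by simp
next
  case (Suc m)
  have "{p \<in> C. snd p < Suc m} = {p \<in> C. snd p < m} \<union> {p \<in> C. snd p = m}" by auto
  moreover have "{p \<in> C. snd p < m} \<inter> {p \<in> C. snd p = m} = {}" by auto
  ultimately have "card {p \<in> C. snd p < Suc m} = card {p \<in> C. snd p < m} + card {p \<in> C. snd p = m}"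
    using fin by (simp add: card_Un_disjoint)
  then show ?case using Suc.IH col_card[OF CV] by simp
qed

theorem lemma4p13:
  fixes n :: nat
  assumes "n \<ge> 1"
  shows "LD (path_vertices 3 \<times> path_vertices n) (cart_adj path_adj path_adj)
           \<ge> (if n mod 3 = 1 then n + 1 else n)"
proof -
  let ?V = "path_vertices 3 \<times> path_vertices n" and ?E = "cart_adj path_adj path_adj"
  have ex: "\<exists>k C. locating_dominating ?V ?E C \<and> card C = k"
    by (rule exI[of _ "card ?V"], rule exI[of _ ?V]) (simp add: locating_dominating_def)
  obtain C where LDC: "locating_dominating ?V ?E C" and cardC: "card C = LD ?V ?E"
    using LeastI_ex[OF ex] unfolding LD_def by blast
  have CV: "C \<subseteq> ?V" using LDC unfolding locating_dominating_def by blast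
  have fin: "finite C" using CV finite_subset by (auto simp: path_vertices_def)
  have CV3: "C \<subseteq> {0..<3} \<times> UNIV" using CV by (auto simp: path_vertices_def)
  have "{p \<in> C. snd p < n} = C" using CV by (auto simp: path_vertices_def)
  then have cs: "card C = (\<Sum>k=1..n. cc C k)" using card_cols[OF CV3 fin, of n] by simp
  have c0: "cc C 0 = 0" by (simp add: cc_def xb_def)
  have bnd: "cc C k \<le> 3" for k by (simp add: cc_def)
  have out: "cc C k = 0" if "k > n" for k
    using that CV by (auto simp: cc_def xb_def path_vertices_def)
  have D: "okD (cc C (k-1)) (cc C k) (cc C (k+1))" if "1 \<le> k" "k \<le> n" for k
    using ruleD[OF LDC, of "k-1"] that by simp
  have F: "okF (cc C (k-1)) (cc C k) (cc C (k+1)) (cc C (k+2))" if "1 \<le> k" "k + 1 \<le> n" for k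
    using ruleF[OF LDC, of "k-1"] that by (simp add: numeral_3_eq_3)
  have "n + (if n mod 3 = 1 then 1 else 0) \<le> (\<Sum>k=1..n. cc C k)"
    by (rule word[OF assms c0 bnd out D F])
  then show ?thesis using cs cardC by (auto split: if_splits)
qed

end
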